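(* Let $\bm{\theta}$ be a target model with softmax outputs $f_{\bm{\theta}}(\bm{x})$, let $p(\boldsymbol{\phi})$ be a (prior/shadow) distribution over model parameters, let $\pi$ be the data population distribution over feature–label pairs, with the target samples belonging to the population, and let $\lambda\in(0,1)$. Define the BASE score \[ \Lambda_{\textsc{BASE}}(\bm{x}_i,y_i;\bm{\theta}) = \sigma\left(-\ell(f_{\bm{\theta}}(\bm{x}_i),y_i) - \log\int e^{-\ell(f_{\boldsymbol{\phi}}(\bm{x}_i),y_i)}p(\boldsymbol{\phi})\,\mathrm{d}\boldsymbol{\phi} + \log\frac{\lambda}{1-\lambda}\right) \] and the RMIA score with parameter $\gamma$ \[ \Lambda_{\textsc{RMIA}}(\bm{x}_i,y_i;\bm{\theta}) = \Pr_{(\bm{x}_j,y_j)\sim\pi}\left[\frac{p(\bm{\theta}\mid\bm{x}_i,y_i)}{p(\bm{\theta}\mid\bm{x}_j,y_j)} \geq \gamma\right], \] where the likelihood ratio is evaluated as $\frac{p(\bm{\theta}\mid\bm{x}_i,y_i)}{p(\bm{\theta}\mid\bm{x}_j,y_j)}=\frac{p(y_i\mid\bm{x}_i,\bm{\theta})/p(y_i\mid\bm{x}_i)}{p(y_j\mid\bm{x}_j,\bm{\theta})/p(y_j\mid\bm{x}_j)}$ with $p(y\mid\bm{x},\bm{\theta})=f_{\bm{\theta}}(\bm{x})_y$ and $p(y\mid\bm{x})=\mathbb{E}_{\boldsymbol{\phi}\sim p(\boldsymbol{\phi})}[f_{\boldsymbol{\phi}}(\bm{x})_y]$. Then the BASE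 attack is equivalent to the RMIA attack with $\gamma=1$; more precisely, the RMIA scores with $\gamma=1$ are related to the BASE scores via a monotone increasing function.
   Context: $\ell(f_{\bm{\theta}}(\bm{x}),y)=-\log f_{\bm{\theta}}(\bm{x})_y$ is the negative log-likelihood loss, and $\sigma$ is the sigmoid function. A score-based membership inference attack predicts "member" for target samples whose score exceeds a decision threshold; two score-based attacks are equivalent if for any decision threshold for one attack there exists a decision threshold for the other attack yielding identical hard predictions (in particular they have identical ROC curves). *)

theory Defs
  imports "HOL-Probability.Probability"
begin

definition sigmoid :: "real \<Rightarrow> real" where
  "sigmoid t = 1 / (1 + exp (- t))"

definition nll :: "('y \<Rightarrow> real) \<Rightarrow> 'y \<Rightarrow> real" where
  "nll p y = - ln (p y)"

text \<open>Models: f phi x is the softmax output vector (over labels) of the model with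
  parameters phi at input x.  The prior/shadow distribution over parameters is the
  measure P.\<close>

definition base_score ::
  "'p measure \<Rightarrow> ('p \<Rightarrow> 'x \<Rightarrow> 'y \<Rightarrow> real) \<Rightarrow> real \<Rightarrow> 'p \<Rightarrow> 'x \<Rightarrow> 'y \<Rightarrow> real" where
  "base_score P f lam \<theta> x y =
     sigmoid (- nll (f \<theta> x) y - ln (\<integral>\<phi>. exp (- nll (f \<phi> x) y) \<partial>P) + ln (lam / (1 - lam)))"

definition marg_lik :: "'p measure \<Rightarrow> ('p \<Rightarrow> 'x \<Rightarrow> 'y \<Rightarrow> real) \<Rightarrow> 'x \<Rightarrow> 'y \<Rightarrow> real" where
  "marg_lik P f x y = (\<integral>\<phi>. f \<phi> x y \<partial>P)"

definition lik_ratio ::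
  "'p measure \<Rightarrow> ('p \<Rightarrow> 'x \<Rightarrow> 'y \<Rightarrow> real) \<Rightarrow> 'p \<Rightarrow> 'x \<times> 'y \<Rightarrow> 'x \<times> 'y \<Rightarrow> real" where
  "lik_ratio P f \<theta> zi zj =
     (f \<theta> (fst zi) (snd zi) / marg_lik P f (fst zi) (snd zi)) /
     (f \<theta> (fst zj) (snd zj) / marg_lik P f (fst zj) (snd zj))"

definition rmia_score ::
  "'p measure \<Rightarrow> ('x \<times> 'y) measure \<Rightarrow> ('p \<Rightarrow> 'x \<Rightarrow> 'y \<Rightarrow> real) \<Rightarrow> real \<Rightarrow> 'p \<Rightarrow> 'x \<Rightarrow> 'y \<Rightarrow> real" where
  "rmia_score P Pop f \<gamma> \<theta> x y =
     measure Pop {zj \<in> space Pop. lik_ratio P f \<theta> (x, y) zj \<ge> \<gamma>}"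

end

theory Submission
  imports Defs
begin

theorem theorem2:
  fixes P :: "'p measure" and Pop :: "('x \<times> 'y::finite) measure"
    and f :: "'p \<Rightarrow> 'x \<Rightarrow> 'y \<Rightarrow> real" and \<theta> :: 'p and lam :: real
  assumes P_prob: "prob_space P"
    and Pi_prob: "prob_space Pop"
    and softmax_pos: "\<And>\<phi> x y. f \<phi> x y > 0"
    and softmax_sum: "\<And>\<phi> x. (\<Sum>y\<in>UNIV. f \<phi> x y) = 1"
    and f_meas: "\<And>x y. (\<lambda>\<phi>. f \<phi> x y) \<in> borel_measurable P"
    and ratio_meas: "(\<lambda>z. f \<theta> (fst z) (snd z) / marg_lik P f (fst z) (snd z)) \<in> borel_measurable Pop"
    and lam: "0 < lam" "lam < 1"
  shows "\<exists>g :: real \<Rightarrow> real. mono g \<and>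
           (\<forall>x y. (x, y) \<in> space Pop \<longrightarrow>
              rmia_score P Pop f 1 \<theta> x y = g (base_score P f lam \<theta> x y))"
proof -
  interpret P: prob_space P by (rule P_prob)
  interpret Q: prob_space Pop by (rule Pi_prob)
  define r where "r = (\<lambda>z. f \<theta> (fst z) (snd z) / marg_lik P f (fst z) (snd z))"
  define c where "c = ln (lam / (1 - lam))"
  define hb where "hb = (\<lambda>t. sigmoid (ln t + c))"
  have le1: "f \<phi> x y \<le> 1" for \<phi> x y
  proof -
    have "f \<phi> x y \<le> (\<Sum>y\<in>UNIV. f \<phi> x y)"
      by (rule member_le_sum) (auto intro: less_imp_le softmax_pos)
    then show ?thesis using softmax_sum by simp
  qed
  have Mpos: "marg_lik P f x y > 0" for x y
  proof -
    have int: "integrable P (\<lambda>\<phi>. f \<phi> x y)"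
      by (rule P.integrable_const_bound[where B=1])
         (use le1 softmax_pos f_meas in \<open>auto simp: abs_of_pos\<close>)
    have nn: "AE \<phi> in P. 0 \<le> f \<phi> x y" using softmax_pos by (simp add: less_imp_le)
    have ge: "0 \<le> marg_lik P f x y" unfolding marg_lik_def
      using nn by (rule integral_nonneg_AE)
    have "marg_lik P f x y \<noteq> 0"
    proof
      assume "marg_lik P f x y = 0"
      then have "AE \<phi> in P. f \<phi> x y = 0"
        using integral_nonneg_eq_0_iff_AE[OF int nn] unfolding marg_lik_def by simp
      then have "AE \<phi> in P. False" using softmax_pos
        by (auto elim!: eventually_mono simp: less_le)
      then show False by simp
    qed
    with ge show ?thesis by simp
  qed
  have rpos: "r z > 0" for z
    unfolding r_def using Mpos softmax_pos by simp
  have sig_mono: "sigmoid a \<le> sigmoid b \<longleftrightarrow> a \<le> b" for a b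
  proof -
    have "1 + exp (- b) > 0" "1 + exp (- a) > 0"
      by (auto intro: add_pos_pos)
    then have "sigmoid a \<le> sigmoid b \<longleftrightarrow> 1 + exp (- b) \<le> 1 + exp (- a)"
      unfolding sigmoid_def by (metis inverse_eq_divide inverse_le_iff_le)
    also have "\<dots> \<longleftrightarrow> a \<le> b" by simp
    finally show ?thesis .
  qed
  have hb_mono: "hb a \<le> hb b \<longleftrightarrow> a \<le> b" if "a > 0" "b > 0" for a b
    unfolding hb_def sig_mono using that by simp
  have base: "base_score P f lam \<theta> x y = hb (r (x, y))" for x y
  proof -
    have e: "exp (- nll (f \<phi> x) y) = f \<phi> x y" for \<phi>
      unfolding nll_def using softmax_pos by simp
    have "- nll (f \<theta> x) y - ln (marg_lik P f x y) = ln (r (x, y))"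
      proof -
      have "ln (r (x, y)) = ln (f \<theta> x y) - ln (marg_lik P f x y)"
        unfolding r_def using softmax_pos[of \<theta> x y] Mpos[of x y] by (simp add: ln_div)
      then show ?thesis unfolding nll_def by simp
    qed
    then show ?thesis
      unfolding base_score_def hb_def c_def e marg_lik_def[symmetric] by simp
  qed
  define g where "g = (\<lambda>s. measure Pop {z \<in> space Pop. hb (r z) \<le> s})"
  have meas: "{z \<in> space Pop. hb (r z) \<le> s} \<in> sets Pop" for s
  proof -
    have "(\<lambda>z. hb (r z)) \<in> borel_measurable Pop"
      unfolding hb_def sigmoid_def using ratio_meas[folded r_def] by measurable
    then show ?thesis by measurable
  qed
  have "mono g"
    unfolding mono_def g_def
    by (auto intro!: Q.finite_measure_mono meas)
  moreover have "rmia_score P Pop f 1 \<theta> x y = g (base_score P f lam \<theta> x y)" for x y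
  proof -
    have "{zj \<in> space Pop. lik_ratio P f \<theta> (x, y) zj \<ge> 1} = {z \<in> space Pop. hb (r z) \<le> hb (r (x, y))}"
    proof -
      have "lik_ratio P f \<theta> (x, y) z \<ge> 1 \<longleftrightarrow> hb (r z) \<le> hb (r (x, y))" for z
      proof -
        have "lik_ratio P f \<theta> (x, y) z = r (x, y) / r z" unfolding lik_ratio_def r_def by simp
        then show ?thesis using rpos[of z] rpos[of "(x,y)"] hb_mono[OF rpos rpos]
          by (simp add: le_divide_eq)
      qed
      then show ?thesis by auto
    qed
    then show ?thesis unfolding rmia_score_def g_def base by simp
  qed
  ultimately show ?thesis by blast
qed

end
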